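(* Let $k$ be a field, $G$ a finite group and $A$ a $G$-Galois algebra over $k$. Then $A$ is a $(G,\mathrm{Aut}_G(A))$-bi-Galois algebra (i.e. $A$, with the natural action of the group $\mathrm{Aut}_G(A)$, is also an $\mathrm{Aut}_G(A)$-Galois algebra) if and only if $|\mathrm{Aut}_G(A)|=|G|$.
   Context: A $G$-algebra is a $k$-algebra with $G$ acting by algebra automorphisms; $\mathrm{Aut}_G(A)$ is the group of $G$-equivariant $k$-algebra automorphisms of $A$, which acts on $A$ by evaluation, commuting with the $G$-action. For a finite group $H$, an $H$-Galois algebra over $k$ is a nonzero $H$-algebra $A$ with $A^H=k$ such that $A\otimes_kA\to\prod_{h\in H}A$, $x\otimes y\mapsto(x(h\cdot y))_h$, is bijective (equivalently a Galois object for the Hopf algebra $\mathcal O_k(H)$ of functions on $H$). A $(G_1,G_2)$-bi-Galois algebra is an algebra with commuting actions of $G_1$ and $G_2$ making it a $G_1$-Galois algebra and a $G_2$-Galois algebra. *)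

theory Defs
  imports "HOL-Algebra.Group" "HOL.Vector_Spaces"
begin

definition k_algebra :: "('k::field \<Rightarrow> 'a::ring_1 \<Rightarrow> 'a) \<Rightarrow> bool" where
  "k_algebra scale \<longleftrightarrow> Vector_Spaces.vector_space scale \<and>
     (\<forall>c x y. scale c (x * y) = scale c x * y \<and> scale c (x * y) = x * scale c y)"

definition alg_aut :: "('k::field \<Rightarrow> 'a::ring_1 \<Rightarrow> 'a) \<Rightarrow> ('a \<Rightarrow> 'a) \<Rightarrow> bool" where
  "alg_aut scale \<phi> \<longleftrightarrow> Vector_Spaces.linear scale scale \<phi> \<and> bij \<phi> \<and> \<phi> 1 = 1 \<and>
     (\<forall>x y. \<phi> (x * y) = \<phi> x * \<phi> y)"

definition group_algebra_action ::
  "('k::field \<Rightarrow> 'a::ring_1 \<Rightarrow> 'a) \<Rightarrow> ('h, 'm) monoid_scheme \<Rightarrow> ('h \<Rightarrow> 'a \<Rightarrow> 'a) \<Rightarrow> bool" where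
  "group_algebra_action scale H act \<longleftrightarrow> group H \<and>
     act \<one>\<^bsub>H\<^esub> = id \<and>
     (\<forall>g\<in>carrier H. \<forall>h\<in>carrier H. act (g \<otimes>\<^bsub>H\<^esub> h) = act g \<circ> act h) \<and>
     (\<forall>g\<in>carrier H. alg_aut scale (act g))"

text \<open>An element of A \<otimes>_k A is represented by a finite list of pairs ps,
  standing for the sum of x \<otimes> y over (x,y) in ps.  Such an element is zero
  iff it is killed by all f \<otimes> g with f, g linear functionals on A
  (valid over a field).\<close>
definition tensor_zero :: "('k::field \<Rightarrow> 'a::ring_1 \<Rightarrow> 'a) \<Rightarrow> ('a \<times> 'a) list \<Rightarrow> bool" where
  "tensor_zero scale ps \<longleftrightarrow>
     (\<forall>f g. Vector_Spaces.linear scale (*) f \<longrightarrow> Vector_Spaces.linear scale (*) g \<longrightarrow>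
        (\<Sum>(x, y)\<leftarrow>ps. f x * g y) = (0::'k))"

definition galois_map :: "('h \<Rightarrow> 'a \<Rightarrow> 'a) \<Rightarrow> ('a::ring_1 \<times> 'a) list \<Rightarrow> 'h \<Rightarrow> 'a" where
  "galois_map act ps h = (\<Sum>(x, y)\<leftarrow>ps. x * act h y)"

definition galois_algebra ::
  "('k::field \<Rightarrow> 'a::ring_1 \<Rightarrow> 'a) \<Rightarrow> ('h, 'm) monoid_scheme \<Rightarrow> ('h \<Rightarrow> 'a \<Rightarrow> 'a) \<Rightarrow> bool" where
  "galois_algebra scale H act \<longleftrightarrow>
     group_algebra_action scale H act \<and> finite (carrier H) \<and>
     (0::'a) \<noteq> 1 \<and>
     {x. \<forall>h\<in>carrier H. act h x = x} = range (\<lambda>c. scale c 1) \<and>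
     \<comment> \<open>Galois map well defined on A \<otimes> A and injective\<close>
     (\<forall>ps. tensor_zero scale ps \<longleftrightarrow> (\<forall>h\<in>carrier H. galois_map act ps h = 0)) \<and>
     \<comment> \<open>Galois map surjective onto \<Prod>_{h\<in>H} A\<close>
     (\<forall>z. \<exists>ps. \<forall>h\<in>carrier H. galois_map act ps h = z h)"

definition bi_galois_algebra ::
  "('k::field \<Rightarrow> 'a::ring_1 \<Rightarrow> 'a) \<Rightarrow> ('g, 'm) monoid_scheme \<Rightarrow> ('g \<Rightarrow> 'a \<Rightarrow> 'a)
     \<Rightarrow> ('h, 'n) monoid_scheme \<Rightarrow> ('h \<Rightarrow> 'a \<Rightarrow> 'a) \<Rightarrow> bool" where
  "bi_galois_algebra scale G1 act1 G2 act2 \<longleftrightarrow>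
     galois_algebra scale G1 act1 \<and> galois_algebra scale G2 act2 \<and>
     (\<forall>g\<in>carrier G1. \<forall>h\<in>carrier G2. act1 g \<circ> act2 h = act2 h \<circ> act1 g)"

definition Aut_G :: "('k::field \<Rightarrow> 'a::ring_1 \<Rightarrow> 'a) \<Rightarrow> ('g, 'm) monoid_scheme \<Rightarrow> ('g \<Rightarrow> 'a \<Rightarrow> 'a)
     \<Rightarrow> ('a \<Rightarrow> 'a) set" where
  "Aut_G scale G act = {\<phi>. alg_aut scale \<phi> \<and> (\<forall>g\<in>carrier G. \<phi> \<circ> act g = act g \<circ> \<phi>)}"

definition Aut_G_group :: "('k::field \<Rightarrow> 'a::ring_1 \<Rightarrow> 'a) \<Rightarrow> ('g, 'm) monoid_scheme \<Rightarrow> ('g \<Rightarrow> 'a \<Rightarrow> 'a)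
     \<Rightarrow> ('a \<Rightarrow> 'a) monoid" where
  "Aut_G_group scale G act = \<lparr>carrier = Aut_G scale G act, monoid.mult = (\<circ>), one = id\<rparr>"

end

theory Submission
  imports Defs "HOL-Library.Function_Algebras"
begin


lemma (in vector_space) inj_endo_surj:
  assumes lin: "Vector_Spaces.linear scale scale f"
    and sub: "subspace V" and spW: "V \<subseteq> span W" and fW: "finite W"
    and into: "f ` V \<subseteq> V" and ker: "\<And>z. z \<in> V \<Longrightarrow> f z = 0 \<Longrightarrow> z = 0"
  shows "V \<subseteq> f ` V"
proof -
  interpret L: Vector_Spaces.linear scale scale f by fact
  obtain B where B: "B \<subseteq> V" "independent B" "V \<subseteq> span B" "card B = dim V"
    using basis_exists by blast
  have spB: "span B = V" using B sub span_minimal[of B V] by auto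
  have fB: "finite B" using independent_span_bound[OF fW B(2)] B(1) spW by auto
  have injV: "inj_on f V"
  proof (rule inj_onI)
    fix x y assume "x \<in> V" "y \<in> V" "f x = f y"
    then have "f (x - y) = 0" by (simp add: L.diff)
    moreover have "x - y \<in> V" using \<open>x \<in> V\<close> \<open>y \<in> V\<close> sub subspace_diff by blast
    ultimately show "x = y" using ker by fastforce
  qed
  have indC: "independent (f ` B)"
    using L.independent_injective_image[OF B(2)] injV spB by simp
  have cardC: "card (f ` B) = card B" using card_image injV B(1) inj_on_subset by blast
  have CV: "f ` B \<subseteq> V" using B(1) into by blast
  show ?thesis
  proof
    fix v assume v: "v \<in> V"
    have "v \<in> span (f ` B)"
    proof (rule ccontr)
      assume nv: "v \<notin> span (f ` B)"
      have ind2: "independent (insert v (f ` B))" using independent_insertI[OF nv indC] .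
      have "insert v (f ` B) \<subseteq> span B" using v CV spB by auto
      then have "card (insert v (f ` B)) \<le> card B"
        using independent_span_bound[OF fB ind2] by auto
      moreover have "v \<notin> f ` B" using nv span_base by blast
      ultimately show False using cardC fB by simp
    qed
    then have "v \<in> f ` span B" using L.span_image by simp
    then show "v \<in> f ` V" using spB by simp
  qed
qed



lemma sum_fun_apply: "(\<Sum>i\<in>A. f i) x = (\<Sum>i\<in>A. f i x)"
  by (induct A rule: infinite_finite_induct) auto

lemma sl_nth: "(\<Sum>p\<leftarrow>ps. f p) = (\<Sum>i<length ps. f (ps!i))"
  by (simp add: sum_list_sum_nth atLeast0LessThan)

lemma galois_map_nth: "galois_map act ps h = (\<Sum>i<length ps. fst (ps!i) * act h (snd (ps!i)))"
  unfolding galois_map_def sl_nth by (simp add: case_prod_beta)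

lemma tensor_zero_nth: "tensor_zero scale ps \<longleftrightarrow>
   (\<forall>f g. Vector_Spaces.linear scale (*) f \<longrightarrow> Vector_Spaces.linear scale (*) g \<longrightarrow>
        (\<Sum>i<length ps. f (fst (ps!i)) * g (snd (ps!i))) = 0)"
  unfolding tensor_zero_def sl_nth by (simp add: case_prod_beta)

locale galctx =
  fixes scale :: "'k::field \<Rightarrow> 'a::ring_1 \<Rightarrow> 'a"
    and K :: "('g, 'm) monoid_scheme"
    and act :: "'g \<Rightarrow> 'a \<Rightarrow> 'a"
  assumes kalg: "k_algebra scale" and gal: "galois_algebra scale K act"
begin

lemma vs: "vector_space scale" using kalg k_algebra_def by blast

sublocale VS: vector_space scale by (rule vs)

lemma smult_left: "scale c x * y = scale c (x * y)" using kalg k_algebra_def by metis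
lemma smult_right: "x * scale c y = scale c (x * y)" using kalg k_algebra_def by metis

lemma grp: "group K" using gal unfolding galois_algebra_def group_algebra_action_def by blast
lemma finK: "finite (carrier K)" using gal unfolding galois_algebra_def by blast
lemma one_neq: "(0::'a) \<noteq> 1" using gal unfolding galois_algebra_def by blast
lemma act_one: "act \<one>\<^bsub>K\<^esub> = id" using gal unfolding galois_algebra_def group_algebra_action_def by blast
lemma act_comp: "g \<in> carrier K \<Longrightarrow> h \<in> carrier K \<Longrightarrow> act (g \<otimes>\<^bsub>K\<^esub> h) = act g \<circ> act h"
  using gal unfolding galois_algebra_def group_algebra_action_def by blast
lemma act_aut: "g \<in> carrier K \<Longrightarrow> alg_aut scale (act g)"
  using gal unfolding galois_algebra_def group_algebra_action_def by blast
lemma fixset: "{x. \<forall>h\<in>carrier K. act h x = x} = range (\<lambda>c. scale c 1)"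
  using gal unfolding galois_algebra_def by blast
lemma galinj: "tensor_zero scale ps \<longleftrightarrow> (\<forall>h\<in>carrier K. galois_map act ps h = 0)"
  using gal unfolding galois_algebra_def by blast
lemma galsurj: "\<exists>ps. \<forall>h\<in>carrier K. galois_map act ps h = z h"
  using gal unfolding galois_algebra_def by blast

lemma act_lin: "g \<in> carrier K \<Longrightarrow> Vector_Spaces.linear scale scale (act g)"
  using act_aut alg_aut_def by blast
lemma act_mult: "g \<in> carrier K \<Longrightarrow> act g (x * y) = act g x * act g y"
  using act_aut alg_aut_def by blast
lemma act_1: "g \<in> carrier K \<Longrightarrow> act g 1 = 1"
  using act_aut alg_aut_def by blast
lemma act_add: "g \<in> carrier K \<Longrightarrow> act g (x + y) = act g x + act g y"
  using act_lin linear_iff by blast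
lemma act_scale: "g \<in> carrier K \<Longrightarrow> act g (scale c x) = scale c (act g x)"
  using act_lin linear_iff by blast
lemma act_0: "g \<in> carrier K \<Longrightarrow> act g 0 = 0"
  by (metis act_add add_cancel_right_right)
lemma act_sum: "g \<in> carrier K \<Longrightarrow> act g (\<Sum>i\<in>A. f i) = (\<Sum>i\<in>A. act g (f i))"
  by (induct A rule: infinite_finite_induct) (auto simp: act_0 act_add)
lemma act_inv1: "g \<in> carrier K \<Longrightarrow> act (inv\<^bsub>K\<^esub> g) (act g x) = x"
  using act_comp[of "inv\<^bsub>K\<^esub> g" g] act_one grp apply (simp add: group.l_inv group.inv_closed)
  by (metis comp_apply id_apply)
lemma act_inv2: "g \<in> carrier K \<Longrightarrow> act g (act (inv\<^bsub>K\<^esub> g) x) = x"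
  using act_comp[of g "inv\<^bsub>K\<^esub> g"] act_one grp apply (simp add: group.r_inv group.inv_closed)
  by (metis comp_apply id_apply)
lemma act_id: "act \<one>\<^bsub>K\<^esub> x = x" by (simp add: act_one)
lemma one_in: "\<one>\<^bsub>K\<^esub> \<in> carrier K" using grp by (simp add: group.is_monoid monoid.one_closed)

definition d :: "('a \<times> 'a) list" where
  "d = (SOME ps. \<forall>h\<in>carrier K. galois_map act ps h = (if h = \<one>\<^bsub>K\<^esub> then 1 else 0))"

definition X where "X i = fst (d!i)"
definition Y where "Y i = snd (d!i)"
definition n where "n = length d"

lemma d_prop: "h \<in> carrier K \<Longrightarrow> (\<Sum>i<n. X i * act h (Y i)) = (if h = \<one>\<^bsub>K\<^esub> then 1 else 0)"
proof -
  assume h: "h \<in> carrier K"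
  have "\<forall>h\<in>carrier K. galois_map act d h = (if h = \<one>\<^bsub>K\<^esub> then 1 else 0)"
    unfolding d_def by (rule someI_ex) (rule galsurj)
  then show ?thesis using h by (simp add: galois_map_nth X_def Y_def n_def)
qed

lemma d_prop2: "g \<in> carrier K \<Longrightarrow> (\<Sum>i<n. act g (X i) * Y i) = (if g = \<one>\<^bsub>K\<^esub> then 1 else 0)"
proof -
  assume g: "g \<in> carrier K"
  define h where "h = inv\<^bsub>K\<^esub> g"
  have h: "h \<in> carrier K" using g grp by (simp add: h_def group.inv_closed)
  have hg: "inv\<^bsub>K\<^esub> h = g" using g grp by (simp add: h_def group.inv_inv)
  have gh: "act g (act h y) = y" for y using act_inv1[OF h, of y] hg by simp
  have "act (inv\<^bsub>K\<^esub> h) (\<Sum>i<n. X i * act h (Y i)) = (\<Sum>i<n. act g (X i) * Y i)"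
    using g h hg by (simp add: act_sum act_mult gh)
  moreover have "act (inv\<^bsub>K\<^esub> h) (\<Sum>i<n. X i * act h (Y i)) = (if g = \<one>\<^bsub>K\<^esub> then 1 else 0)"
  proof -
    have "(h = \<one>\<^bsub>K\<^esub>) = (g = \<one>\<^bsub>K\<^esub>)" using g grp h_def
      by (metis group.is_monoid monoid.inv_one hg)
    then show ?thesis using d_prop[OF h] hg g by (auto simp: act_1 act_0)
  qed
  ultimately show ?thesis by simp
qed

definition tr :: "'a \<Rightarrow> 'a" where "tr a = (\<Sum>g\<in>carrier K. act g a)"

lemma tr_fixed: "h \<in> carrier K \<Longrightarrow> act h (tr a) = tr a"
proof -
  assume h: "h \<in> carrier K"
  have "act h (tr a) = (\<Sum>g\<in>carrier K. act (h \<otimes>\<^bsub>K\<^esub> g) a)"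
    unfolding tr_def using h by (simp add: act_sum act_comp grp group.is_monoid monoid.m_closed)
  also have "\<dots> = (\<Sum>g\<in>carrier K. act g a)"
    apply (rule sum.reindex_bij_witness[of _ "\<lambda>g. inv\<^bsub>K\<^esub> h \<otimes>\<^bsub>K\<^esub> g" "\<lambda>g. h \<otimes>\<^bsub>K\<^esub> g"])
    using h grp by (auto simp: group.inv_closed monoid.m_closed group.is_monoid
        group.inv_solve_left' group.inv_solve_left monoid.m_assoc[symmetric] group.r_inv group.l_inv
        monoid.l_one)
  finally show ?thesis unfolding tr_def .
qed

lemma tr_in: "tr a \<in> range (\<lambda>c. scale c 1)"
  using fixset tr_fixed by blast

definition tau :: "'a \<Rightarrow> 'k" where "tau a = (SOME c. tr a = scale c 1)"

lemma tau_eq: "tr a = scale (tau a) 1"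
  unfolding tau_def using tr_in by (metis (mono_tags, lifting) image_iff someI_ex)

lemma scale1_inj: "scale c 1 = scale c' 1 \<Longrightarrow> c = c'"
  using VS.scale_cancel_right one_neq by metis

lemma tr_add: "tr (a + b) = tr a + tr b"
  unfolding tr_def by (simp add: act_add sum.distrib)
lemma tr_scale: "tr (scale c a) = scale c (tr a)"
  unfolding tr_def by (simp add: act_scale VS.scale_sum_right)

lemma tau_lin: "Vector_Spaces.linear scale (*) tau"
proof -
  have "tau (a + b) = tau a + tau b" for a b
    using tr_add[of a b] unfolding tau_eq
    by (intro scale1_inj) (simp add: VS.scale_left_distrib)
  moreover have "tau (scale c a) = c * tau a" for c a
    using tr_scale[of c a] unfolding tau_eq
    by (intro scale1_inj) (simp add: VS.scale_scale)
  moreover have "vector_space ((*) :: 'k \<Rightarrow> 'k \<Rightarrow> 'k)"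
    by (unfold_locales) (auto simp: algebra_simps)
  ultimately show ?thesis using vs by (simp add: linear_iff)
qed

lemma scale_is_mult: "scale c b = scale c 1 * b"
  by (simp add: smult_left)

lemma sum_delta1: "(\<Sum>g\<in>carrier K. (F::'g \<Rightarrow> 'a) g * (if g = \<one>\<^bsub>K\<^esub> then 1 else 0)) = F \<one>\<^bsub>K\<^esub>"
proof -
  have "(\<Sum>g\<in>carrier K. F g * (if g = \<one>\<^bsub>K\<^esub> then 1 else 0)) = (\<Sum>g\<in>carrier K. if g = \<one>\<^bsub>K\<^esub> then F g else 0)"
    by (rule sum.cong) auto
  also have "\<dots> = F \<one>\<^bsub>K\<^esub>" using finK one_in by (simp add: sum.delta')
  finally show ?thesis .
qed

lemma expand: "a = (\<Sum>i<n. scale (tau (a * X i)) (Y i))"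
proof -
  have "(\<Sum>i<n. scale (tau (a * X i)) (Y i)) = (\<Sum>i<n. tr (a * X i) * Y i)"
    by (simp add: tau_eq smult_left)
  also have "\<dots> = (\<Sum>i<n. \<Sum>g\<in>carrier K. act g a * (act g (X i) * Y i))"
    unfolding tr_def by (simp add: sum_distrib_right act_mult mult.assoc)
  also have "\<dots> = (\<Sum>g\<in>carrier K. act g a * (\<Sum>i<n. act g (X i) * Y i))"
    by (simp add: sum.swap[of _ "{..<n}"] sum_distrib_left)
  also have "\<dots> = (\<Sum>g\<in>carrier K. act g a * (if g = \<one>\<^bsub>K\<^esub> then 1 else 0))"
    by (simp add: d_prop2)
  also have "\<dots> = a" by (simp add: sum_delta1 act_id)
  finally show ?thesis by simp
qed

end


lemma lin_add: "Vector_Spaces.linear s1 s2 f \<Longrightarrow> f (x + y) = f x + f y"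
  by (simp add: linear_iff)
lemma lin_scale: "Vector_Spaces.linear s1 s2 f \<Longrightarrow> f (s1 c x) = s2 c (f x)"
  by (simp add: linear_iff)
lemma lin_0: "Vector_Spaces.linear s1 s2 f \<Longrightarrow> f 0 = 0"
  by (metis add_cancel_right_right lin_add)
lemma lin_sum: "Vector_Spaces.linear s1 s2 f \<Longrightarrow> f (\<Sum>i\<in>A. g i) = (\<Sum>i\<in>A. f (g i))"
  by (induct A rule: infinite_finite_induct) (auto simp: lin_0 lin_add)

lemma vs_k: "vector_space ((*) :: 'k::field \<Rightarrow> 'k \<Rightarrow> 'k)"
  by (unfold_locales) (auto simp: algebra_simps)

context galctx begin

definition alpha :: "('a \<Rightarrow> 'a) \<Rightarrow> 'g \<Rightarrow> 'a" where
  "alpha f g = (\<Sum>i<n. act g (X i) * f (Y i))"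

lemma span_right:
  assumes f: "Vector_Spaces.linear scale scale f"
  shows "f a = (\<Sum>g\<in>carrier K. act g a * alpha f g)"
proof -
  have "f a = f (\<Sum>i<n. scale (tau (a * X i)) (Y i))" using expand by metis
  also have "\<dots> = (\<Sum>i<n. scale (tau (a * X i)) (f (Y i)))"
    using f by (simp add: lin_sum lin_scale)
  also have "\<dots> = (\<Sum>i<n. tr (a * X i) * f (Y i))"
    by (simp add: tau_eq smult_left)
  also have "\<dots> = (\<Sum>i<n. \<Sum>g\<in>carrier K. act g a * (act g (X i) * f (Y i)))"
    unfolding tr_def by (simp add: sum_distrib_right act_mult mult.assoc)
  also have "\<dots> = (\<Sum>g\<in>carrier K. act g a * alpha f g)"
    unfolding alpha_def by (simp add: sum.swap[of _ "{..<n}"] sum_distrib_left)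
  finally show ?thesis .
qed

lemma indep_right:
  assumes z: "\<And>a. (\<Sum>g\<in>carrier K. act g a * c g) = 0" and h: "h \<in> carrier K"
  shows "c h = 0"
proof -
  obtain ps where ps: "\<forall>g\<in>carrier K. galois_map act ps g = (if g = h then 1 else 0)"
    using galsurj[of "\<lambda>g. if g = h then 1 else 0"] by blast
  have "0 = (\<Sum>i<length ps. fst (ps!i) * (\<Sum>g\<in>carrier K. act g (snd (ps!i)) * c g))"
    by (simp add: z)
  also have "\<dots> = (\<Sum>g\<in>carrier K. (\<Sum>i<length ps. fst (ps!i) * act g (snd (ps!i))) * c g)"
    by (simp add: sum_distrib_left sum_distrib_right sum.swap[of _ "{..<length ps}"] mult.assoc)
  also have "\<dots> = (\<Sum>g\<in>carrier K. (if g = h then 1 else 0) * c g)"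
    using ps by (simp add: galois_map_nth)
  also have "\<dots> = (\<Sum>g\<in>carrier K. if g = h then c g else 0)" by (rule sum.cong) auto
  also have "\<dots> = c h" using finK h by (simp add: sum.delta')
  finally show ?thesis by simp
qed

definition mu :: "nat \<Rightarrow> 'a \<Rightarrow> 'k" where "mu j a = tau (a * X j)"

lemma mu_lin: "Vector_Spaces.linear scale (*) (mu j)"
proof -
  have "mu j (a + b) = mu j a + mu j b" for a b
    unfolding mu_def using tau_lin by (simp add: distrib_right lin_add)
  moreover have "mu j (scale c a) = c * mu j a" for c a
    unfolding mu_def using tau_lin by (simp add: smult_left lin_scale)
  ultimately show ?thesis using vs vs_k by (simp add: linear_iff)
qed

lemma expand_mu: "a = (\<Sum>j<n. scale (mu j a) (Y j))"
  unfolding mu_def by (rule expand)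

lemma comp_lin: "Vector_Spaces.linear scale scale f \<Longrightarrow> Vector_Spaces.linear scale (*) (\<lambda>y. mu l (f y))"
  using mu_lin vs vs_k by (simp add: linear_iff)

lemma tensor_imp:
  assumes tz: "tensor_zero scale ps" and f: "Vector_Spaces.linear scale scale f"
  shows "(\<Sum>i<length ps. fst (ps!i) * f (snd (ps!i))) = 0"
proof -
  let ?x = "\<lambda>i. fst (ps!i)" and ?y = "\<lambda>i. snd (ps!i)"
  have prod: "?x i * f (?y i) = (\<Sum>j<n. \<Sum>l<n. scale (mu j (?x i) * mu l (f (?y i))) (Y j * Y l))" for i
  proof -
    have "?x i * f (?y i) = (\<Sum>j<n. scale (mu j (?x i)) (Y j)) * (\<Sum>l<n. scale (mu l (f (?y i))) (Y l))"
      using expand_mu by metis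
    also have "\<dots> = (\<Sum>j<n. \<Sum>l<n. scale (mu j (?x i) * mu l (f (?y i))) (Y j * Y l))"
      unfolding sum_product by (simp add: smult_left smult_right mult.commute)
    finally show ?thesis .
  qed
  have "(\<Sum>i<length ps. ?x i * f (?y i))
      = (\<Sum>j<n. \<Sum>l<n. scale (\<Sum>i<length ps. mu j (?x i) * mu l (f (?y i))) (Y j * Y l))"
    unfolding prod by (simp add: VS.scale_sum_left sum.swap[of _ "{..<length ps}"])
  also have "\<dots> = 0"
  proof -
    have "(\<Sum>i<length ps. mu j (?x i) * mu l (f (?y i))) = 0" for j l
      using tz mu_lin[of j] comp_lin[OF f, of l] unfolding tensor_zero_nth by blast
    then show ?thesis by simp
  qed
  finally show ?thesis .
qed

end

lemma imp_tensor:
  fixes scale :: "'k::field \<Rightarrow> 'a::ring_1 \<Rightarrow> 'a"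
  assumes kalg: "k_algebra scale"
    and h: "\<And>f. Vector_Spaces.linear scale scale f \<Longrightarrow> (\<Sum>i<length ps. fst (ps!i) * f (snd (ps!i))) = 0"
  shows "tensor_zero scale ps"
  unfolding tensor_zero_nth
proof (intro allI impI)
  fix f g :: "'a \<Rightarrow> 'k"
  assume f: "Vector_Spaces.linear scale (*) f" and g: "Vector_Spaces.linear scale (*) g"
  have vs: "vector_space scale" using kalg k_algebra_def by blast
  interpret V: vector_space scale by (rule vs)
  have sr: "x * scale c y = scale c (x * y)" for x y :: 'a and c using kalg k_algebra_def by metis
  have F: "Vector_Spaces.linear scale scale (\<lambda>y. scale (g y) 1)"
    using g vs vs_k by (simp add: linear_iff V.scale_left_distrib)
  have "(\<Sum>i<length ps. fst (ps!i) * scale (g (snd (ps!i))) 1) = 0" using h[OF F] .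
  then have "(\<Sum>i<length ps. scale (g (snd (ps!i))) (fst (ps!i))) = 0" by (simp add: sr)
  then have "f (\<Sum>i<length ps. scale (g (snd (ps!i))) (fst (ps!i))) = 0" using f lin_0 by metis
  then show "(\<Sum>i<length ps. f (fst (ps!i)) * g (snd (ps!i))) = 0"
    using f by (simp add: lin_sum lin_scale mult.commute)
qed



context galctx begin

definition sF :: "'k \<Rightarrow> ('g \<Rightarrow> 'a) \<Rightarrow> ('g \<Rightarrow> 'a)" where "sF c z = (\<lambda>g. scale c (z g))"

lemma vsF: "vector_space sF"
  using vs unfolding vector_space_def sF_def by (auto simp: fun_eq_iff)

sublocale FS: vector_space sF by (rule vsF)

definition VK :: "('g \<Rightarrow> 'a) set" where "VK = {z. \<forall>g. g \<notin> carrier K \<longrightarrow> z g = 0}"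

definition WK :: "('g \<Rightarrow> 'a) set" where
  "WK = (\<lambda>(g,i). (\<lambda>g'. if g' = g then Y i else 0)) ` (carrier K \<times> {..<n})"

lemma subVK: "FS.subspace VK"
  by (rule FS.subspaceI) (auto simp: VK_def sF_def VS.scale_zero_right)

lemma finWK: "finite WK" unfolding WK_def using finK by simp

lemma VK_span: "VK \<subseteq> FS.span WK"
proof
  fix z assume z: "z \<in> VK"
  have eq: "z = (\<Sum>g\<in>carrier K. \<Sum>i<n. sF (tau (z g * X i)) (\<lambda>g'. if g' = g then Y i else 0))"
  proof (rule ext)
    fix g'
    have "(\<Sum>g\<in>carrier K. \<Sum>i<n. sF (tau (z g * X i)) (\<lambda>g'. if g' = g then Y i else 0)) g'
        = (\<Sum>g\<in>carrier K. \<Sum>i<n. scale (tau (z g * X i)) (if g' = g then Y i else 0))"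
      by (simp add: sum_fun_apply sF_def)
    also have "\<dots> = (\<Sum>g\<in>carrier K. if g' = g then z g else 0)"
    proof (rule sum.cong[OF refl])
      fix g show "(\<Sum>i<n. scale (tau (z g * X i)) (if g' = g then Y i else 0)) = (if g' = g then z g else 0)"
      proof -
        have ex: "(\<Sum>i<n. scale (tau (z g * X i)) (Y i)) = z g" using expand[of "z g"] by (rule sym)
        show ?thesis using ex by auto
      qed
    qed
    also have "\<dots> = z g'" using z finK by (auto simp: VK_def)
    finally show "z g' = (\<Sum>g\<in>carrier K. \<Sum>i<n. sF (tau (z g * X i)) (\<lambda>g'. if g' = g then Y i else 0)) g'"
      by simp
  qed
  have "(\<Sum>g\<in>carrier K. \<Sum>i<n. sF (tau (z g * X i)) (\<lambda>g'. if g' = g then Y i else 0)) \<in> FS.span WK"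
  proof (intro FS.span_sum FS.span_scale FS.span_base)
    fix g i assume "g \<in> carrier K" "i \<in> {..<n}"
    then show "(\<lambda>g'. if g' = g then Y i else 0) \<in> WK" unfolding WK_def
      by (auto intro!: image_eqI[where x="(g,i)"])
  qed
  then show "z \<in> FS.span WK" using eq by simp
qed

lemma count:
  assumes lin: "Vector_Spaces.linear sF sF \<Theta>" and into: "\<And>z. \<Theta> z \<in> VK"
    and ker: "\<And>z. z \<in> VK \<Longrightarrow> \<Theta> z = 0 \<Longrightarrow> z = 0" and w: "w \<in> VK"
  shows "\<exists>z\<in>VK. w = \<Theta> z"
  using FS.inj_endo_surj[OF lin subVK VK_span finWK _ ker] into w by blast

lemma lin_sF_iff: "Vector_Spaces.linear sF sF \<Theta> \<longleftrightarrow>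
   (\<forall>x y. \<Theta> (x + y) = \<Theta> x + \<Theta> y) \<and> (\<forall>c x. \<Theta> (sF c x) = sF c (\<Theta> x))"
  using vsF by (simp add: linear_iff)

end



context galctx begin

abbreviation H where "H \<equiv> Aut_G scale K act"

lemma H_lin: "\<phi> \<in> H \<Longrightarrow> Vector_Spaces.linear scale scale \<phi>"
  by (simp add: Aut_G_def alg_aut_def)
lemma H_mult: "\<phi> \<in> H \<Longrightarrow> \<phi> (x * y) = \<phi> x * \<phi> y"
  by (simp add: Aut_G_def alg_aut_def)
lemma H_1: "\<phi> \<in> H \<Longrightarrow> \<phi> 1 = 1"
  by (simp add: Aut_G_def alg_aut_def)
lemma H_bij: "\<phi> \<in> H \<Longrightarrow> bij \<phi>"
  by (simp add: Aut_G_def alg_aut_def)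
lemma H_comm: "\<phi> \<in> H \<Longrightarrow> g \<in> carrier K \<Longrightarrow> \<phi> (act g x) = act g (\<phi> x)"
  unfolding Aut_G_def by (auto simp: fun_eq_iff)
lemma H_add: "\<phi> \<in> H \<Longrightarrow> \<phi> (x + y) = \<phi> x + \<phi> y"
  using H_lin lin_add by blast
lemma H_scale: "\<phi> \<in> H \<Longrightarrow> \<phi> (scale c x) = scale c (\<phi> x)"
  using H_lin lin_scale by blast

lemma id_in_H: "id \<in> H"
  unfolding Aut_G_def alg_aut_def using vs by (simp add: linear_iff)

lemma comp_in_H: "\<phi> \<in> H \<Longrightarrow> \<psi> \<in> H \<Longrightarrow> \<phi> \<circ> \<psi> \<in> H"
  unfolding Aut_G_def alg_aut_def using vs
  by (auto simp: linear_iff bij_comp fun_eq_iff)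

lemma inv_in_H:
  assumes p: "\<phi> \<in> H" shows "inv_into UNIV \<phi> \<in> H"
proof -
  have b: "bij \<phi>" using H_bij p by blast
  have fi: "\<phi> (inv_into UNIV \<phi> x) = x" for x using b by (simp add: bij_is_surj surj_f_inv_f)
  have if': "inv_into UNIV \<phi> (\<phi> x) = x" for x using b by (simp add: bij_is_inj inv_f_f)
  have eq: "inv_into UNIV \<phi> x = y \<longleftrightarrow> x = \<phi> y" for x y using fi if' by metis
  have "inv_into UNIV \<phi> (x + y) = inv_into UNIV \<phi> x + inv_into UNIV \<phi> y" for x y using eq fi H_add[OF p] by metis
  moreover have "inv_into UNIV \<phi> (scale c x) = scale c (inv_into UNIV \<phi> x)" for c x using eq fi H_scale[OF p] by metis
  moreover have "inv_into UNIV \<phi> (x * y) = inv_into UNIV \<phi> x * inv_into UNIV \<phi> y" for x y using eq fi H_mult[OF p] by metis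
  moreover have "inv_into UNIV \<phi> 1 = 1" using eq H_1[OF p] by metis
  moreover have "bij (inv_into UNIV \<phi>)" using b bij_imp_bij_inv by blast
  moreover have "inv_into UNIV \<phi> (act g x) = act g (inv_into UNIV \<phi> x)" if "g \<in> carrier K" for g x
    using eq fi H_comm[OF p that] by metis
  ultimately show ?thesis unfolding Aut_G_def alg_aut_def using vs
    by (auto simp: linear_iff fun_eq_iff)
qed

lemma H_group: "group (Aut_G_group scale K act)"
proof (rule groupI)
  show "\<And>x y. x \<in> carrier (Aut_G_group scale K act) \<Longrightarrow> y \<in> carrier (Aut_G_group scale K act) \<Longrightarrow>
      x \<otimes>\<^bsub>Aut_G_group scale K act\<^esub> y \<in> carrier (Aut_G_group scale K act)"
    by (simp add: Aut_G_group_def comp_in_H)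
  show "\<one>\<^bsub>Aut_G_group scale K act\<^esub> \<in> carrier (Aut_G_group scale K act)"
    by (simp add: Aut_G_group_def id_in_H)
  show "\<And>x y z. x \<in> carrier (Aut_G_group scale K act) \<Longrightarrow> y \<in> carrier (Aut_G_group scale K act) \<Longrightarrow>
      z \<in> carrier (Aut_G_group scale K act) \<Longrightarrow>
      x \<otimes>\<^bsub>Aut_G_group scale K act\<^esub> y \<otimes>\<^bsub>Aut_G_group scale K act\<^esub> z =
      x \<otimes>\<^bsub>Aut_G_group scale K act\<^esub> (y \<otimes>\<^bsub>Aut_G_group scale K act\<^esub> z)"
    by (simp add: Aut_G_group_def comp_assoc)
  show "\<And>x. x \<in> carrier (Aut_G_group scale K act) \<Longrightarrow>
      \<one>\<^bsub>Aut_G_group scale K act\<^esub> \<otimes>\<^bsub>Aut_G_group scale K act\<^esub> x = x"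
    by (simp add: Aut_G_group_def)
  show "\<And>x. x \<in> carrier (Aut_G_group scale K act) \<Longrightarrow>
      \<exists>y\<in>carrier (Aut_G_group scale K act). y \<otimes>\<^bsub>Aut_G_group scale K act\<^esub> x = \<one>\<^bsub>Aut_G_group scale K act\<^esub>"
    by (auto simp: Aut_G_group_def intro!: bexI[where x="inv_into UNIV _"] inv_in_H
        inv_o_cancel bij_is_inj H_bij)
qed

definition kind :: "('a \<Rightarrow> 'a) set \<Rightarrow> bool" where
  "kind S \<longleftrightarrow> (\<forall>lam. (\<forall>a. (\<Sum>\<phi>\<in>S. scale (lam \<phi>) (\<phi> a)) = 0) \<longrightarrow> (\<forall>\<phi>\<in>S. lam \<phi> = 0))"

lemma descent:
  assumes SH: "S \<subseteq> H" and ki: "kind S"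
    and rel: "\<And>a. (\<Sum>\<phi>\<in>S. \<phi> a * c \<phi>) = 0" and p: "\<psi> \<in> S"
  shows "c \<psi> = 0"
proof -
  have claim: "(\<Sum>\<phi>\<in>S. scale (tau (c \<phi> * X i)) (\<phi> a)) = 0" for i a
  proof -
    have "(\<Sum>\<phi>\<in>S. scale (tau (c \<phi> * X i)) (\<phi> a)) = (\<Sum>\<phi>\<in>S. \<phi> a * tr (c \<phi> * X i))"
      by (simp add: tau_eq smult_right)
    also have "\<dots> = (\<Sum>\<phi>\<in>S. \<Sum>g\<in>carrier K. act g (\<phi> (act (inv\<^bsub>K\<^esub> g) a) * c \<phi>) * act g (X i))"
      unfolding tr_def sum_distrib_left
    proof (intro sum.cong refl)
      fix \<phi> g assume "\<phi> \<in> S" "g \<in> carrier K"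
      then have "\<phi> a = act g (\<phi> (act (inv\<^bsub>K\<^esub> g) a))"
        using SH H_comm act_inv2 grp group.inv_closed by (metis subsetD)
      then show "\<phi> a * act g (c \<phi> * X i) = act g (\<phi> (act (inv\<^bsub>K\<^esub> g) a) * c \<phi>) * act g (X i)"
        using \<open>g \<in> carrier K\<close> by (simp add: act_mult mult.assoc)
    qed
    also have "\<dots> = (\<Sum>g\<in>carrier K. act g (\<Sum>\<phi>\<in>S. \<phi> (act (inv\<^bsub>K\<^esub> g) a) * c \<phi>) * act g (X i))"
      by (simp add: sum.swap[of _ S] act_sum sum_distrib_right)
    also have "\<dots> = 0" by (simp add: rel act_0)
    finally show ?thesis .
  qed
  have "tau (c \<psi> * X i) = 0" for i
  proof -
    have "(\<forall>a. (\<Sum>\<phi>\<in>S. scale (tau (c \<phi> * X i)) (\<phi> a)) = 0) \<longrightarrow> (\<forall>\<phi>\<in>S. tau (c \<phi> * X i) = 0)"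
      using spec[OF ki[unfolded kind_def], of "\<lambda>\<phi>. tau (c \<phi> * X i)"] by simp
    then show ?thesis using claim p by blast
  qed
  then have "(\<Sum>i<n. scale (tau (c \<psi> * X i)) (Y i)) = 0" by simp
  then show ?thesis using expand[of "c \<psi>"] by argo
qed

lemma dedekind: "finite S \<Longrightarrow> S \<subseteq> H \<Longrightarrow> kind S"
proof (induct S rule: finite_induct)
  case empty then show ?case by (simp add: kind_def)
next
  case (insert \<psi> S)
  have SH: "S \<subseteq> H" and pH: "\<psi> \<in> H" using insert by auto
  have kS: "kind S" using insert SH by blast
  show ?case unfolding kind_def
  proof (intro allI impI)
    fix lam assume R: "\<forall>a. (\<Sum>\<phi>\<in>insert \<psi> S. scale (lam \<phi>) (\<phi> a)) = 0"
    have R': "(\<Sum>\<phi>\<in>S. scale (lam \<phi>) (\<phi> a)) = - scale (lam \<psi>) (\<psi> a)" for a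
      using R insert(1,2) by (simp add: eq_neg_iff_add_eq_0 add.commute)
    have zero_S: "lam \<phi> = 0" if "\<phi> \<in> S" for \<phi>
    proof -
      have "\<phi> \<noteq> \<psi>" using that insert(2) by blast
      then obtain b where b: "\<phi> b \<noteq> \<psi> b" by blast
      have rel: "(\<Sum>\<phi>\<in>S. \<phi> a * scale (lam \<phi>) (\<phi> b - \<psi> b)) = 0" for a
      proof -
        have "(\<Sum>\<phi>\<in>S. \<phi> a * scale (lam \<phi>) (\<phi> b - \<psi> b))
            = (\<Sum>\<phi>\<in>S. scale (lam \<phi>) (\<phi> (a * b))) - (\<Sum>\<phi>\<in>S. scale (lam \<phi>) (\<phi> a)) * \<psi> b"
          using SH by (simp add: smult_right smult_left H_mult subset_iff right_diff_distrib
              VS.scale_right_diff_distrib sum_subtractf sum_distrib_right)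
        also have "\<dots> = - scale (lam \<psi>) (\<psi> (a * b)) + scale (lam \<psi>) (\<psi> a) * \<psi> b"
          by (simp add: R')
        also have "\<dots> = 0" using pH by (simp add: H_mult smult_left)
        finally show ?thesis .
      qed
      have "scale (lam \<phi>) (\<phi> b - \<psi> b) = 0"
        using descent[OF SH kS rel that] .
      then show ?thesis using b by simp
    qed
    have "(\<Sum>\<phi>\<in>insert \<psi> S. scale (lam \<phi>) (\<phi> 1)) = scale (lam \<psi>) 1"
      using insert(1,2) zero_S pH by (simp add: H_1)
    then have "lam \<psi> = 0" using R one_neq by (metis VS.scale_eq_0_iff)
    then show "\<forall>\<phi>\<in>insert \<psi> S. lam \<phi> = 0" using zero_S by blast
  qed
qed

end



context galctx begin

lemma right_indep_H:
  assumes fH: "finite H" and rel: "\<And>a. (\<Sum>\<phi>\<in>H. \<phi> a * c \<phi>) = 0" and p: "\<psi> \<in> H"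
  shows "c \<psi> = 0"
  using descent[OF subset_refl dedekind[OF fH subset_refl] rel p] .

context
  fixes \<beta> :: "'g \<Rightarrow> 'a \<Rightarrow> 'a"
  assumes bb: "bij_betw \<beta> (carrier K) H"
begin

definition T :: "('g \<Rightarrow> 'a) \<Rightarrow> 'a \<Rightarrow> 'a" where
  "T z a = (\<Sum>g\<in>carrier K. \<beta> g a * z g)"

lemma bH: "g \<in> carrier K \<Longrightarrow> \<beta> g \<in> H" by (rule bij_betw_apply[OF bb])

lemma fH: "finite H" using bij_betw_finite[OF bb] finK by simp

lemma T_lin: "Vector_Spaces.linear scale scale (T z)"
proof -
  have "T z (a + b) = T z a + T z b" for a b
    unfolding T_def by (simp add: bH H_add distrib_right sum.distrib)
  moreover have "T z (scale c a) = scale c (T z a)" for c a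
    unfolding T_def by (simp add: bH H_scale smult_left VS.scale_sum_right)
  ultimately show ?thesis using vs by (simp add: linear_iff)
qed

lemma T_ker: assumes z: "z \<in> VK" and t: "\<And>a. T z a = 0" shows "z = 0"
proof (rule ext)
  fix g
  show "z g = 0 g"
  proof (cases "g \<in> carrier K")
    case False then show ?thesis using z by (simp add: VK_def)
  next
    case True
    have rel: "(\<Sum>\<phi>\<in>H. \<phi> a * z (inv_into (carrier K) \<beta> \<phi>)) = 0" for a
    proof -
      have "(\<Sum>\<phi>\<in>H. \<phi> a * z (inv_into (carrier K) \<beta> \<phi>)) = (\<Sum>g\<in>carrier K. \<beta> g a * z (inv_into (carrier K) \<beta> (\<beta> g)))"
        using sum.reindex_bij_betw[OF bb, of "\<lambda>\<phi>. \<phi> a * z (inv_into (carrier K) \<beta> \<phi>)"] by simp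
      also have "\<dots> = T z a" unfolding T_def
        using bb by (intro sum.cong refl) (simp add: bij_betw_inv_into_left)
      finally show ?thesis using t by simp
    qed
    have "z (inv_into (carrier K) \<beta> (\<beta> g)) = 0"
      using right_indep_H[OF fH rel bH[OF True]] by simp
    then show ?thesis using bb True by (simp add: bij_betw_inv_into_left)
  qed
qed

definition Th :: "('g \<Rightarrow> 'a) \<Rightarrow> ('g \<Rightarrow> 'a)" where
  "Th z = (\<lambda>g. if g \<in> carrier K then alpha (T z) g else 0)"

lemma Th_lin: "Vector_Spaces.linear sF sF Th"
  unfolding lin_sF_iff
proof (intro conjI allI)
  fix x y show "Th (x + y) = Th x + Th y"
    unfolding Th_def alpha_def T_def
    by (auto simp: fun_eq_iff distrib_left sum.distrib)
next
  fix c x show "Th (sF c x) = sF c (Th x)"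
    unfolding Th_def alpha_def T_def sF_def
    by (auto simp: fun_eq_iff smult_right VS.scale_sum_right[symmetric])
qed

lemma T_rep: assumes f: "Vector_Spaces.linear scale scale f" shows "\<exists>z\<in>VK. f = T z"
proof -
  define w where "w = (\<lambda>g. if g \<in> carrier K then alpha f g else 0)"
  have w: "w \<in> VK" by (simp add: w_def VK_def)
  have into: "Th z \<in> VK" for z by (simp add: Th_def VK_def)
  have ker: "z = 0" if "z \<in> VK" "Th z = 0" for z
  proof (rule T_ker[OF that(1)])
    fix a
    have "T z a = (\<Sum>g\<in>carrier K. act g a * alpha (T z) g)" by (rule span_right[OF T_lin])
    also have "\<dots> = 0"
    proof -
      have "alpha (T z) g = 0" if "g \<in> carrier K" for g
        using fun_cong[OF \<open>Th z = 0\<close>, of g] that by (simp add: Th_def)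
      then show ?thesis by simp
    qed
    finally show "T z a = 0" .
  qed
  obtain z where z: "z \<in> VK" "w = Th z" using count[OF Th_lin into ker w] by blast
  have "f a = T z a" for a
  proof -
    have "f a = (\<Sum>g\<in>carrier K. act g a * alpha f g)" by (rule span_right[OF f])
    also have "\<dots> = (\<Sum>g\<in>carrier K. act g a * alpha (T z) g)"
    proof (intro sum.cong refl)
      fix g assume "g \<in> carrier K"
      then have "w g = Th z g" using z by simp
      then show "act g a * alpha f g = act g a * alpha (T z) g"
        using \<open>g \<in> carrier K\<close> by (simp add: w_def Th_def)
    qed
    also have "\<dots> = T z a" by (rule span_right[OF T_lin, symmetric])
    finally show ?thesis .
  qed
  then show ?thesis using z by blast
qed

lemma T_uniq: assumes "z1 \<in> VK" "z2 \<in> VK" "T z1 = T z2" shows "z1 = z2"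
proof -
  have "z1 - z2 \<in> VK" using assms by (simp add: VK_def)
  moreover have "T (z1 - z2) a = 0" for a
  proof -
    have "T (z1 - z2) a = T z1 a - T z2 a"
      unfolding T_def by (simp add: right_diff_distrib sum_subtractf)
    then show ?thesis using assms by simp
  qed
  ultimately have "z1 - z2 = 0" by (rule T_ker)
  then show ?thesis by simp
qed

lemma H_galois: "galois_algebra scale (Aut_G_group scale K act) (\<lambda>\<phi> x. \<phi> x)"
proof -
  have car: "carrier (Aut_G_group scale K act) = H" by (simp add: Aut_G_group_def)
  have gaa: "group_algebra_action scale (Aut_G_group scale K act) (\<lambda>\<phi> x. \<phi> x)"
    unfolding group_algebra_action_def using H_group
    by (auto simp: Aut_G_group_def Aut_G_def fun_eq_iff id_def)
  have fixH: "{x. \<forall>\<phi>\<in>H. \<phi> x = x} = range (\<lambda>c. scale c 1)"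
  proof
    show "range (\<lambda>c. scale c 1) \<subseteq> {x. \<forall>\<phi>\<in>H. \<phi> x = x}"
      by (auto simp: H_scale H_1)
  next
    show "{x. \<forall>\<phi>\<in>H. \<phi> x = x} \<subseteq> range (\<lambda>c. scale c 1)"
    proof
      fix b assume "b \<in> {x. \<forall>\<phi>\<in>H. \<phi> x = x}"
      then have bf: "\<And>\<phi>. \<phi> \<in> H \<Longrightarrow> \<phi> b = b" by blast
      have comm: "f (b * y) = b * f y" if f: "Vector_Spaces.linear scale scale f" for f y
      proof -
        obtain z where "f = T z" using T_rep[OF f] by blast
        then show ?thesis unfolding T_def
          by (simp add: bH H_mult bf sum_distrib_left mult.assoc)
      qed
      obtain j where j: "mu j 1 \<noteq> 0"
      proof -
        have "\<exists>j. mu j 1 \<noteq> 0"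
        proof (rule ccontr)
          assume "\<nexists>j. mu j 1 \<noteq> 0"
          then have "(\<Sum>j<n. scale (mu j 1) (Y j)) = 0" by simp
          then show False using one_neq expand_mu[of 1] by argo
        qed
        then show ?thesis using that by blast
      qed
      define F where "F y = scale (mu j y / mu j 1) 1" for y
      have Fl: "Vector_Spaces.linear scale scale F"
        using mu_lin[of j] vs unfolding F_def
        by (simp add: linear_iff add_divide_distrib VS.scale_left_distrib)
      have "F (b * 1) = b * F 1" by (rule comm[OF Fl])
      then have "b = F b" using j by (simp add: F_def)
      then show "b \<in> range (\<lambda>c. scale c 1)" unfolding F_def by blast
    qed
  qed
  have tens: "tensor_zero scale ps \<longleftrightarrow> (\<forall>h\<in>carrier (Aut_G_group scale K act). galois_map (\<lambda>\<phi> x. \<phi> x) ps h = 0)"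
    for ps
  proof
    assume "tensor_zero scale ps"
    then show "\<forall>h\<in>carrier (Aut_G_group scale K act). galois_map (\<lambda>\<phi> x. \<phi> x) ps h = 0"
      using tensor_imp H_lin by (simp add: car galois_map_nth)
  next
    assume A: "\<forall>h\<in>carrier (Aut_G_group scale K act). galois_map (\<lambda>\<phi> x. \<phi> x) ps h = 0"
    show "tensor_zero scale ps"
    proof (rule imp_tensor[OF kalg])
      fix f assume f: "Vector_Spaces.linear scale scale f"
      obtain z where z: "f = T z" using T_rep[OF f] by blast
      have "(\<Sum>i<length ps. fst (ps!i) * f (snd (ps!i)))
          = (\<Sum>g\<in>carrier K. (\<Sum>i<length ps. fst (ps!i) * \<beta> g (snd (ps!i))) * z g)"
        unfolding z T_def
        by (simp add: sum_distrib_left sum_distrib_right sum.swap[of _ "{..<length ps}"] mult.assoc)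
      also have "\<dots> = 0" using A bH by (simp add: car galois_map_nth)
      finally show "(\<Sum>i<length ps. fst (ps!i) * f (snd (ps!i))) = 0" .
    qed
  qed
  have surj: "\<exists>ps. \<forall>h\<in>carrier (Aut_G_group scale K act). galois_map (\<lambda>\<phi> x. \<phi> x) ps h = zz h"
    for zz :: "('a \<Rightarrow> 'a) \<Rightarrow> 'a"
  proof -
    define W where "W g = (SOME w. w \<in> VK \<and> act g = T w)" for g
    have W: "W g \<in> VK \<and> act g = T (W g)" if "g \<in> carrier K" for g
      unfolding W_def
      by (rule someI_ex[where P="\<lambda>w. w \<in> VK \<and> act g = T w"]) (use T_rep[OF act_lin[OF that]] in blast)
    define b where "b g = (\<Sum>h\<in>carrier K. zz (\<beta> h) * W g h)" for g
    obtain ps where ps: "\<forall>g\<in>carrier K. galois_map act ps g = b g" using galsurj by blast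
    have "galois_map (\<lambda>\<phi> x. \<phi> x) ps \<phi> = zz \<phi>" if p: "\<phi> \<in> H" for \<phi>
    proof -
      obtain h0 where h0: "h0 \<in> carrier K" "\<phi> = \<beta> h0"
        using bb p unfolding bij_betw_def by blast
      have delta: "(\<Sum>g\<in>carrier K. W g h * alpha \<phi> g) = (if h = h0 then 1 else 0)"
        if h: "h \<in> carrier K" for h
      proof -
        define u where "u = (\<lambda>h. if h \<in> carrier K then (\<Sum>g\<in>carrier K. W g h * alpha \<phi> g) else 0)"
        define e where "e = (\<lambda>h::'g. if h = h0 then (1::'a) else 0)"
        have uV: "u \<in> VK" by (simp add: u_def VK_def)
        have eV: "e \<in> VK" using h0 by (simp add: e_def VK_def)
        have "T u a = T e a" for a
        proof -
          have "T u a = (\<Sum>h\<in>carrier K. \<beta> h a * (\<Sum>g\<in>carrier K. W g h * alpha \<phi> g))"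
            unfolding T_def u_def by simp
          also have "\<dots> = (\<Sum>h\<in>carrier K. \<Sum>g\<in>carrier K. \<beta> h a * (W g h * alpha \<phi> g))"
            by (simp add: sum_distrib_left)
          also have "\<dots> = (\<Sum>g\<in>carrier K. \<Sum>h\<in>carrier K. \<beta> h a * (W g h * alpha \<phi> g))"
            by (rule sum.swap)
          also have "\<dots> = (\<Sum>g\<in>carrier K. (\<Sum>h\<in>carrier K. \<beta> h a * W g h) * alpha \<phi> g)"
            by (simp add: sum_distrib_right mult.assoc)
          also have "\<dots> = (\<Sum>g\<in>carrier K. act g a * alpha \<phi> g)"
            using W by (simp add: T_def)
          also have "\<dots> = \<phi> a" by (rule span_right[OF H_lin[OF p], symmetric])
          also have "\<dots> = T e a" unfolding T_def e_def using h0 finK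
            by (simp add: if_distrib sum.delta cong: if_cong)
          finally show ?thesis .
        qed
        then have "u = e" using T_uniq[OF uV eV] by blast
        then have "u h = e h" by simp
        then show ?thesis using h by (simp add: u_def e_def)
      qed
      have "galois_map (\<lambda>\<phi> x. \<phi> x) ps \<phi> = (\<Sum>i<length ps. fst (ps!i) * \<phi> (snd (ps!i)))"
        by (simp add: galois_map_nth)
      also have "\<dots> = (\<Sum>i<length ps. fst (ps!i) * (\<Sum>g\<in>carrier K. act g (snd (ps!i)) * alpha \<phi> g))"
        using span_right[OF H_lin[OF p]] by simp
      also have "\<dots> = (\<Sum>g\<in>carrier K. (\<Sum>i<length ps. fst (ps!i) * act g (snd (ps!i))) * alpha \<phi> g)"
        by (simp add: sum_distrib_left sum_distrib_right sum.swap[of _ "{..<length ps}"] mult.assoc)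
      also have "\<dots> = (\<Sum>g\<in>carrier K. b g * alpha \<phi> g)"
        using ps by (simp add: galois_map_nth)
      also have "\<dots> = (\<Sum>g\<in>carrier K. \<Sum>h\<in>carrier K. zz (\<beta> h) * (W g h * alpha \<phi> g))"
        unfolding b_def by (simp add: sum_distrib_right mult.assoc)
      also have "\<dots> = (\<Sum>h\<in>carrier K. \<Sum>g\<in>carrier K. zz (\<beta> h) * (W g h * alpha \<phi> g))"
        by (rule sum.swap)
      also have "\<dots> = (\<Sum>h\<in>carrier K. zz (\<beta> h) * (\<Sum>g\<in>carrier K. W g h * alpha \<phi> g))"
        by (simp add: sum_distrib_left)
      also have "\<dots> = (\<Sum>h\<in>carrier K. zz (\<beta> h) * (if h = h0 then 1 else 0))"
        by (simp add: delta)
      also have "\<dots> = zz \<phi>" using h0 finK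
        by (simp add: if_distrib sum.delta cong: if_cong)
      finally show ?thesis .
    qed
    then show ?thesis by (auto simp: car)
  qed
  show ?thesis unfolding galois_algebra_def
  proof (intro conjI)
    show "group_algebra_action scale (Aut_G_group scale K act) (\<lambda>\<phi> x. \<phi> x)" by (rule gaa)
    show "finite (carrier (Aut_G_group scale K act))" using fH car by simp
    show "(0::'a) \<noteq> 1" by (rule one_neq)
    show "{x. \<forall>h\<in>carrier (Aut_G_group scale K act). h x = x} = range (\<lambda>c. scale c 1)"
      using fixH car by simp
    show "\<forall>ps. tensor_zero scale ps = (\<forall>h\<in>carrier (Aut_G_group scale K act). galois_map (\<lambda>\<phi> x. \<phi> x) ps h = 0)"
      using tens by blast
    show "\<forall>z. \<exists>ps. \<forall>h\<in>carrier (Aut_G_group scale K act). galois_map (\<lambda>\<phi> x. \<phi> x) ps h = z h"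
      using surj by blast
  qed
qed

end

end

lemma card_not_less:
  fixes scale :: "'k::field \<Rightarrow> 'a::ring_1 \<Rightarrow> 'a"
    and K1 :: "('g1, 'm1) monoid_scheme" and K2 :: "('g2, 'm2) monoid_scheme"
  assumes g1: "galctx scale K1 act1" and g2: "galctx scale K2 act2"
  shows "\<not> card (carrier K2) < card (carrier K1)"
proof
  assume lt: "card (carrier K2) < card (carrier K1)"
  interpret A: galctx scale K1 act1 by (rule g1)
  interpret B: galctx scale K2 act2 by (rule g2)
  obtain \<iota> where io: "\<iota> ` carrier K2 \<subseteq> carrier K1" "inj_on \<iota> (carrier K2)"
    using card_le_inj[OF B.finK A.finK] lt by fastforce
  have "card (\<iota> ` carrier K2) < card (carrier K1)" using lt io by (simp add: card_image)
  then obtain g0 where g0: "g0 \<in> carrier K1" "g0 \<notin> \<iota> ` carrier K2"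
    using io(1) by (metis card_mono A.finK less_le subsetI subset_antisym)
  define S where "S z = (\<lambda>a. \<Sum>g\<in>carrier K1. act1 g a * z g)" for z
  have S_lin: "Vector_Spaces.linear scale scale (S z)" for z
  proof -
    have "S z (a + b) = S z a + S z b" for a b
      unfolding S_def by (simp add: A.act_add distrib_right sum.distrib)
    moreover have "S z (scale c a) = scale c (S z a)" for c a
      unfolding S_def by (simp add: A.act_scale A.smult_left A.VS.scale_sum_right)
    ultimately show ?thesis using A.vs by (simp add: linear_iff)
  qed
  define Th where "Th z = (\<lambda>g. if g \<in> \<iota> ` carrier K2 then B.alpha (S z) (inv_into (carrier K2) \<iota> g) else 0)"
    for z
  have lin: "Vector_Spaces.linear A.sF A.sF Th"
    unfolding A.lin_sF_iff
  proof (intro conjI allI)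
    fix x y show "Th (x + y) = Th x + Th y"
      unfolding Th_def B.alpha_def S_def
      by (auto simp: fun_eq_iff distrib_left sum.distrib)
  next
    fix c x show "Th (A.sF c x) = A.sF c (Th x)"
      unfolding Th_def B.alpha_def S_def A.sF_def
      by (auto simp: fun_eq_iff A.smult_right A.VS.scale_sum_right[symmetric])
  qed
  have into: "Th z \<in> A.VK" for z using io(1) by (auto simp: Th_def A.VK_def)
  have ker: "z = 0" if z: "z \<in> A.VK" "Th z = 0" for z
  proof (rule ext)
    fix g
    have al: "B.alpha (S z) h = 0" if "h \<in> carrier K2" for h
    proof -
      have "Th z (\<iota> h) = 0" using z by simp
      then show ?thesis using that io by (simp add: Th_def)
    qed
    have "S z a = 0" for a
      using B.span_right[OF S_lin, of z a] al by simp
    then have "z g = 0" if "g \<in> carrier K1" for g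
      using A.indep_right[OF _ that] unfolding S_def by blast
    then show "z g = 0 g" using z(1) by (auto simp: A.VK_def)
  qed
  define w where "w = (\<lambda>g. if g = g0 then (1::'a) else 0)"
  have wV: "w \<in> A.VK" using g0 by (simp add: w_def A.VK_def)
  obtain z where "w = Th z" using A.count[OF lin into ker wV] by blast
  then have "w g0 = Th z g0" by simp
  then show False using g0 A.one_neq by (simp add: w_def Th_def)
qed



theorem lemma2p5:
  fixes scale :: "'k::field \<Rightarrow> 'a::ring_1 \<Rightarrow> 'a"
    and G :: "('g, 'm) monoid_scheme"
    and act :: "'g \<Rightarrow> 'a \<Rightarrow> 'a"
  assumes "k_algebra scale"
    and "galois_algebra scale G act"
  shows "bi_galois_algebra scale G act (Aut_G_group scale G act) (\<lambda>\<phi> x. \<phi> x)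
         \<longleftrightarrow> card (Aut_G scale G act) = card (carrier G)"
proof -
  interpret galctx scale G act using assms by (rule galctx.intro)
  have car: "carrier (Aut_G_group scale G act) = Aut_G scale G act" by (simp add: Aut_G_group_def)
  show ?thesis
  proof
    assume bi: "bi_galois_algebra scale G act (Aut_G_group scale G act) (\<lambda>\<phi> x. \<phi> x)"
    then have "galctx scale (Aut_G_group scale G act) (\<lambda>\<phi> x. \<phi> x)"
      using assms(1) by (simp add: bi_galois_algebra_def galctx.intro)
    then have "\<not> card (carrier (Aut_G_group scale G act)) < card (carrier G)"
      and "\<not> card (carrier G) < card (carrier (Aut_G_group scale G act))"
      using card_not_less galctx_axioms by blast+
    then show "card (Aut_G scale G act) = card (carrier G)" using car by simp
  next
    assume c: "card (Aut_G scale G act) = card (carrier G)"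
    have "finite (Aut_G scale G act)" using c finK one_in
      by (metis card_gt_0_iff card.infinite empty_iff)
    then obtain \<beta> where bb: "bij_betw \<beta> (carrier G) (Aut_G scale G act)"
      using c finK by (metis finite_same_card_bij)
    have "galois_algebra scale (Aut_G_group scale G act) (\<lambda>\<phi> x. \<phi> x)"
      by (rule H_galois[OF bb])
    moreover have "\<forall>g\<in>carrier G. \<forall>h\<in>carrier (Aut_G_group scale G act).
        act g \<circ> (\<lambda>x. h x) = (\<lambda>x. h x) \<circ> act g"
      by (auto simp: car Aut_G_def)
    ultimately show "bi_galois_algebra scale G act (Aut_G_group scale G act) (\<lambda>\<phi> x. \<phi> x)"
      using assms(2) by (simp add: bi_galois_algebra_def)
  qed
qed



end
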